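(* Let $g:\mathbb{R}^m\to\mathbb{R}$ be a continuous convex function and $X\subset\mathbb{R}^m$ a closed convex set, and suppose the solution set $\mathbf{X}^*=\{x\in X: g(x)\le0\}$ is non-empty. Let $\alpha(t)\ge0$, $\beta(t)\ge0$ satisfy $\int_0^\infty\alpha(t)\,dt=\infty$ and $\int_0^\infty\beta(t)\,dt=\infty$. Then any solution $x(t)$ of $$\dot x(t)=-\alpha(t)\big[x(t)-P_X(x(t))\big]-\beta(t)\nabla g^+(x(t))$$ converges to a vector $x^*\in\mathbf{X}^*$.
   Context: $g^+(x)=\max[g(x),0]$; $\nabla g^+(x)$ denotes a subgradient of the convex function $g^+$ at $x$ (piecewise continuous in $x$); $P_X$ is the Euclidean projection onto $X$. *)

theory Defs
  imports "HOL-Analysis.Analysis"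
begin

definition pos_part_fun :: "('a \<Rightarrow> real) \<Rightarrow> 'a \<Rightarrow> real" where
  "pos_part_fun g x = max (g x) 0"

definition is_subgradient :: "('a::real_inner \<Rightarrow> real) \<Rightarrow> 'a \<Rightarrow> 'a \<Rightarrow> bool" where
  "is_subgradient h x v \<longleftrightarrow> (\<forall>y. h y \<ge> h x + v \<bullet> (y - x))"

end

theory Submission
  imports Defs
begin

lemma real_induct_mono:
  fixes \<Psi> :: "real \<Rightarrow> real"
  assumes ab: "a \<le> b"
    and cont: "continuous_on {a..b} \<Psi>"
    and loc: "\<And>r. a \<le> r \<Longrightarrow> r < b \<Longrightarrow> \<exists>\<eta>>0. \<forall>u. r < u \<and> u < r + \<eta> \<and> u \<le> b \<longrightarrow> \<Psi> u \<le> \<Psi> r"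
  shows "\<Psi> b \<le> \<Psi> a"
proof -
  define S where "S = {u\<in>{a..b}. \<forall>v\<in>{a..u}. \<Psi> v \<le> \<Psi> a}"
  define m where "m = Sup S"
  have aS: "a \<in> S" using ab by (auto simp: S_def)
  have bdd: "bdd_above S" by (auto simp: S_def bdd_above_def)
  have mge: "a \<le> m" using aS bdd by (simp add: m_def cSup_upper)
  have mle: "m \<le> b" unfolding m_def using aS by (intro cSup_least) (auto simp: S_def)
  have below: "\<Psi> v \<le> \<Psi> a" if "a \<le> v" "v < m" for v
  proof -
    obtain u where "u \<in> S" "v < u" using less_cSupE[of v S] \<open>v < m\<close> aS unfolding m_def by blast
    then show ?thesis using that by (auto simp: S_def)
  qed
  have mS: "\<Psi> m \<le> \<Psi> a"
  proof (cases "a = m")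
    case True then show ?thesis by simp
  next
    case False
    then have am: "a < m" using mge by simp
    have "((\<lambda>v. \<Psi> v) \<longlongrightarrow> \<Psi> m) (at m within {a..<m})"
    proof -
      have "continuous (at m within {a..b}) \<Psi>" using cont mge mle
        by (simp add: continuous_on_eq_continuous_within)
      then have "continuous (at m within {a..<m}) \<Psi>"
        by (rule continuous_within_subset) (use mle in auto)
      then show ?thesis by (simp add: continuous_within)
    qed
    moreover have "eventually (\<lambda>v. \<Psi> v \<le> \<Psi> a) (at m within {a..<m})"
      using below by (auto simp: eventually_at_filter)
    moreover have "at m within {a..<m} \<noteq> bot"
      using am by (subst at_within_eq_bot_iff) auto
    ultimately show ?thesis by (rule tendsto_upperbound)
  qed
  have allm: "\<forall>v\<in>{a..m}. \<Psi> v \<le> \<Psi> a"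
    using below mS by (metis atLeastAtMost_iff order_le_less)
  show ?thesis
  proof (cases "m = b")
    case True then show ?thesis using mS by simp
  next
    case False
    then have "m < b" using mle by simp
    then obtain \<eta> where \<eta>: "\<eta> > 0" "\<forall>u. m < u \<and> u < m + \<eta> \<and> u \<le> b \<longrightarrow> \<Psi> u \<le> \<Psi> m"
      using loc mge by blast
    define u where "u = min (m + \<eta>/2) b"
    have "u \<in> S" unfolding S_def
    proof (safe)
      show "u \<in> {a..b}" using mge mle \<eta> by (auto simp: u_def)
      fix v assume "v \<in> {a..u}"
      then show "\<Psi> v \<le> \<Psi> a"
        using allm \<eta> mS \<open>m<b\<close> by (cases "v \<le> m") (force simp: u_def)+
    qed
    then have "u \<le> m" unfolding m_def using bdd by (rule cSup_upper)
    then show ?thesis using \<eta> \<open>m < b\<close> by (auto simp: u_def)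
  qed
qed

locale flow =
  fixes g :: "'a::euclidean_space \<Rightarrow> real"
    and X :: "'a set"
    and \<alpha> \<beta> :: "real \<Rightarrow> real"
    and G :: "'a \<Rightarrow> 'a"
    and x :: "real \<Rightarrow> 'a"
  assumes g_cont: "continuous_on UNIV g"
    and X_closed: "closed X"
    and X_convex: "convex X"
    and sol_nonempty: "{y \<in> X. g y \<le> 0} \<noteq> {}"
    and G_subgrad: "\<And>y. is_subgradient (pos_part_fun g) y (G y)"
    and \<alpha>_nonneg: "\<And>t. t \<ge> 0 \<Longrightarrow> \<alpha> t \<ge> 0"
    and \<beta>_nonneg: "\<And>t. t \<ge> 0 \<Longrightarrow> \<beta> t \<ge> 0"
    and \<alpha>_loc_int: "\<And>T. T \<ge> 0 \<Longrightarrow> \<alpha> integrable_on {0..T}"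
    and \<beta>_loc_int: "\<And>T. T \<ge> 0 \<Longrightarrow> \<beta> integrable_on {0..T}"
    and \<alpha>_div: "filterlim (\<lambda>T. integral {0..T} \<alpha>) at_top at_top"
    and \<beta>_div: "filterlim (\<lambda>T. integral {0..T} \<beta>) at_top at_top"
    and x_sol: "\<And>t. t \<ge> 0 \<Longrightarrow>
        (\<lambda>s. - (\<alpha> s *\<^sub>R (x s - closest_point X (x s))) - \<beta> s *\<^sub>R G (x s))
          absolutely_integrable_on {0..t} \<and>
        ((\<lambda>s. - (\<alpha> s *\<^sub>R (x s - closest_point X (x s))) - \<beta> s *\<^sub>R G (x s))
          has_integral (x t - x 0)) {0..t}"
begin

definition "f s = - (\<alpha> s *\<^sub>R (x s - closest_point X (x s))) - \<beta> s *\<^sub>R G (x s)"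
definition "D y = dist y (closest_point X y)"
definition "gp = pos_part_fun g"
definition "h s = \<alpha> s * (D (x s))\<^sup>2 + \<beta> s * gp (x s)"

lemma Xne: "X \<noteq> {}" using sol_nonempty by auto

lemma f_absint0: "0 \<le> b \<Longrightarrow> f absolutely_integrable_on {0..b}"
  unfolding f_def[abs_def] by (rule conjunct1[OF x_sol])

lemma f_absint: assumes "0 \<le> a" "a \<le> b" shows "f absolutely_integrable_on {a..b}"
proof (rule absolutely_integrable_on_subinterval[OF f_absint0[of b]])
  show "0 \<le> b" using assms by simp
  show "{a..b} \<subseteq> {0..b}" using assms by auto
qed

lemma f_int: "0 \<le> a \<Longrightarrow> a \<le> b \<Longrightarrow> f integrable_on {a..b}"
  using f_absint set_lebesgue_integral_eq_integral(1) by blast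

lemma normf_int: "0 \<le> a \<Longrightarrow> a \<le> b \<Longrightarrow> (\<lambda>s. norm (f s)) integrable_on {a..b}"
  using f_absint absolutely_integrable_on_def by blast

lemma f_has0: "0 \<le> b \<Longrightarrow> (f has_integral (x b - x 0)) {0..b}"
  unfolding f_def[abs_def] by (rule conjunct2[OF x_sol])

lemma x_eq: "0 \<le> t \<Longrightarrow> x t = x 0 + integral {0..t} f"
  using integral_unique[OF f_has0[of t]] by (metis add.commute diff_add_cancel)

lemma x_has: assumes "0 \<le> a" "a \<le> b" shows "(f has_integral (x b - x a)) {a..b}"
proof -
  have ab: "f integrable_on {0..b}" using f_int[of 0 b] assms by linarith
  have "integral {0..a} f + integral {a..b} f = integral {0..b} f"
    by (rule Henstock_Kurzweil_Integration.integral_combine[OF assms(1,2) ab])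
  moreover have "integral {0..b} f = x b - x 0" using integral_unique[OF f_has0[of b]] assms by linarith
  moreover have "integral {0..a} f = x a - x 0" using integral_unique[OF f_has0[of a]] assms by linarith
  ultimately have "integral {a..b} f = x b - x a" by (metis add_diff_cancel_left' diff_diff_eq2 diff_add_cancel)
  then show ?thesis using f_int[OF assms] by (metis has_integral_integral)
qed

lemma x_cont: assumes "0 \<le> a" "a \<le> b" shows "continuous_on {a..b} x"
proof -
  have "continuous_on {0..b} (\<lambda>t. x 0 + integral {0..t} f)"
    using indefinite_integral_continuous_1[OF f_int[of 0 b]] assms
    by (intro continuous_on_add continuous_on_const) auto
  then have "continuous_on {0..b} x"
  proof (rule continuous_on_eq)
    fix t assume "t \<in> {0..b}"
    then show "x 0 + integral {0..t} f = x t" using x_eq[of t] by simp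
  qed
  then show ?thesis by (rule continuous_on_subset) (use assms in auto)
qed

lemma gp_cont: "continuous_on UNIV gp"
  unfolding gp_def pos_part_fun_def[abs_def]
  using g_cont by (intro continuous_intros) auto

lemma gp_nonneg: "gp y \<ge> 0" by (simp add: gp_def pos_part_fun_def)

lemma D_cont: "continuous_on UNIV D"
  unfolding D_def[abs_def]
  using continuous_on_closest_point[OF X_convex X_closed Xne]
  by (intro continuous_intros) auto

lemma D_lip: "D y - D y' \<le> dist y y'"
proof -
  have "D y \<le> dist y (closest_point X y')"
    unfolding D_def using closest_point_le[OF X_closed closest_point_in_set[OF X_closed Xne]] .
  also have "\<dots> \<le> dist y y' + D y'" unfolding D_def by (rule dist_triangle)
  finally show ?thesis by simp
qed

lemma D_nonneg: "D y \<ge> 0" by (simp add: D_def)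

lemma \<alpha>_int: "0 \<le> a \<Longrightarrow> a \<le> b \<Longrightarrow> \<alpha> integrable_on {a..b}"
  using \<alpha>_loc_int[of b] integrable_subinterval_real[of \<alpha> 0 b a b] by auto
lemma \<beta>_int: "0 \<le> a \<Longrightarrow> a \<le> b \<Longrightarrow> \<beta> integrable_on {a..b}"
  using \<beta>_loc_int[of b] integrable_subinterval_real[of \<beta> 0 b a b] by auto

lemma prod_int:
  fixes w :: "real \<Rightarrow> real"
  assumes ab: "0 \<le> a" "a \<le> b" and c: "continuous_on UNIV \<phi>"
    and w: "w integrable_on {a..b}" and wn: "\<And>s. s \<ge> 0 \<Longrightarrow> w s \<ge> 0"
  shows "(\<lambda>s. w s * \<phi> (x s)) integrable_on {a..b}"
proof -
  have wa: "w absolutely_integrable_on {a..b}"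
    using w wn ab by (intro nonnegative_absolutely_integrable_1) auto
  have cc: "continuous_on {a..b} (\<lambda>s. \<phi> (x s))"
    using c x_cont[OF ab] by (intro continuous_on_compose2[OF c]) auto
  have "(\<lambda>s. \<phi> (x s) * w s) absolutely_integrable_on {a..b}"
  proof (rule absolutely_integrable_bounded_measurable_product_real)
    show "(\<lambda>s. \<phi> (x s)) \<in> borel_measurable (lebesgue_on {a..b})"
      using cc by (rule continuous_imp_measurable_on_sets_lebesgue) auto
    show "bounded ((\<lambda>s. \<phi> (x s)) ` {a..b})"
      using cc by (intro compact_imp_bounded compact_continuous_image) auto
  qed (use wa in auto)
  then have "(\<lambda>s. \<phi> (x s) * w s) integrable_on {a..b}"
    using set_lebesgue_integral_eq_integral(1) by blast
  moreover have "(\<lambda>s. \<phi> (x s) * w s) = (\<lambda>s. w s * \<phi> (x s))"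
    by (rule ext) (rule mult.commute)
  ultimately show ?thesis by simp
qed

lemma h_int: assumes "0 \<le> a" "a \<le> b" shows "h integrable_on {a..b}"
proof -
  have c2: "continuous_on UNIV (\<lambda>y. (D y)\<^sup>2)"
    using D_cont by (intro continuous_intros)
  have "(\<lambda>s. \<alpha> s * (\<lambda>y. (D y)\<^sup>2) (x s)) integrable_on {a..b}"
    by (rule prod_int[OF assms c2 \<alpha>_int[OF assms] \<alpha>_nonneg])
  moreover have "(\<lambda>s. \<beta> s * gp (x s)) integrable_on {a..b}"
    by (rule prod_int[OF assms gp_cont \<beta>_int[OF assms] \<beta>_nonneg])
  ultimately show ?thesis unfolding h_def[abs_def] by (rule integrable_add)
qed

lemma h_nonneg: "s \<ge> 0 \<Longrightarrow> h s \<ge> 0"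
  unfolding h_def using \<alpha>_nonneg[of s] \<beta>_nonneg[of s] gp_nonneg by auto

lemma norm_f_le: assumes "s \<ge> 0"
  shows "norm (f s) \<le> \<alpha> s * D (x s) + \<beta> s * norm (G (x s))"
proof -
  have "norm (f s) \<le> norm (\<alpha> s *\<^sub>R (x s - closest_point X (x s))) + norm (\<beta> s *\<^sub>R G (x s))"
    unfolding f_def by (rule order_trans[OF norm_triangle_ineq4]) simp
  also have "\<dots> = \<alpha> s * D (x s) + \<beta> s * norm (G (x s))"
    using \<alpha>_nonneg[OF assms] \<beta>_nonneg[OF assms] by (simp add: D_def dist_norm)
  finally show ?thesis .
qed

lemma key: assumes s: "s \<ge> 0" and z: "z \<in> X" "g z \<le> 0"
  shows "f s \<bullet> (x s - z) \<le> - h s"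
proof -
  let ?y = "x s" let ?p = "closest_point X (x s)"
  have 1: "(?y - ?p) \<bullet> (z - ?p) \<le> 0" using closest_point_dot[OF X_convex X_closed z(1)] .
  have "(?y - ?p) \<bullet> (?y - z) = (?y - ?p) \<bullet> (?y - ?p) - (?y - ?p) \<bullet> (z - ?p)"
    by (simp add: inner_diff_right)
  then have A: "(?y - ?p) \<bullet> (?y - z) \<ge> (D ?y)\<^sup>2"
    using 1 by (simp add: D_def dist_norm power2_norm_eq_inner)
  have gz: "gp z = 0" using z by (simp add: gp_def pos_part_fun_def)
  have "gp z \<ge> gp ?y + G ?y \<bullet> (z - ?y)"
    using G_subgrad[of ?y] by (simp add: is_subgradient_def gp_def)
  then have B: "G ?y \<bullet> (?y - z) \<ge> gp ?y" using gz
    by (simp add: inner_diff_right)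
  have "f s \<bullet> (?y - z) = - (\<alpha> s * ((?y - ?p) \<bullet> (?y - z))) - \<beta> s * (G ?y \<bullet> (?y - z))"
    unfolding f_def by (simp add: inner_diff_left)
  also have "\<dots> \<le> - (\<alpha> s * (D ?y)\<^sup>2) - \<beta> s * gp ?y"
  proof -
    have "\<alpha> s * (D ?y)\<^sup>2 \<le> \<alpha> s * ((?y - ?p) \<bullet> (?y - z))"
      using A \<alpha>_nonneg[OF s] by (rule mult_left_mono)
    moreover have "\<beta> s * gp ?y \<le> \<beta> s * (G ?y \<bullet> (?y - z))"
      using B \<beta>_nonneg[OF s] by (rule mult_left_mono)
    ultimately show ?thesis by linarith
  qed
  finally show ?thesis unfolding h_def by simp
qed

end

context flow
begin

lemma norm_add_sq: "(norm (p + q))\<^sup>2 = (norm q)\<^sup>2 + 2 * (p \<bullet> q) + (norm (p::'a))\<^sup>2"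
  by (simp add: power2_norm_eq_inner inner_add_left inner_add_right inner_commute)

definition "nf s = norm (f s)"

lemma nf_int: "0 \<le> a \<Longrightarrow> a \<le> b \<Longrightarrow> nf integrable_on {a..b}"
  unfolding nf_def[abs_def] by (rule normf_int)

lemma int_split:
  assumes "0 \<le> a" "a \<le> r" "r \<le> u" and int: "\<And>a b. 0 \<le> a \<Longrightarrow> a \<le> b \<Longrightarrow> (k::real\<Rightarrow>real) integrable_on {a..b}"
  shows "integral {a..u} k = integral {a..r} k + integral {r..u} k"
  using Henstock_Kurzweil_Integration.integral_combine[OF assms(2,3) int[of a u]] assms by linarith

lemma energy_eps:
  assumes z: "z \<in> X" "g z \<le> 0" and ab: "0 \<le> a" "a \<le> b" and e: "\<epsilon> > 0"
  shows "(norm (x b - z))\<^sup>2 + 2 * integral {a..b} h \<le> (norm (x a - z))\<^sup>2 + \<epsilon> * integral {a..b} nf"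
proof -
  define \<Psi> where "\<Psi> t = (norm (x t - z))\<^sup>2 + 2 * integral {a..t} h - \<epsilon> * integral {a..t} nf" for t
  have "\<Psi> b \<le> \<Psi> a"
  proof (rule real_induct_mono[OF ab(2)])
    have c1: "continuous_on {a..b} (\<lambda>t. integral {a..t} h)"
      by (rule indefinite_integral_continuous_1[OF h_int[OF ab]])
    have c2: "continuous_on {a..b} (\<lambda>t. integral {a..t} nf)"
      by (rule indefinite_integral_continuous_1[OF nf_int[OF ab]])
    have c3: "continuous_on {a..b} (\<lambda>t. (norm (x t - z))\<^sup>2)"
      using x_cont[OF ab] by (intro continuous_intros)
    show "continuous_on {a..b} \<Psi>"
      unfolding \<Psi>_def[abs_def] using c1 c2 c3 x_cont[OF ab] by (intro continuous_intros)
  next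
    fix r assume r: "a \<le> r" "r < b"
    have rb: "r \<in> {a..b}" using r by auto
    have e3: "\<epsilon>/3 > 0" using e by simp
    obtain \<eta> where \<eta>: "\<eta> > 0" "\<And>u. u \<in> {a..b} \<Longrightarrow> dist u r < \<eta> \<Longrightarrow> dist (x u) (x r) < \<epsilon>/3"
      using x_cont[OF ab] rb e3 unfolding continuous_on_iff by metis
    show "\<exists>\<eta>>0. \<forall>u. r < u \<and> u < r + \<eta> \<and> u \<le> b \<longrightarrow> \<Psi> u \<le> \<Psi> r"
    proof (intro exI[of _ \<eta>] conjI allI impI)
      show "\<eta> > 0" by (rule \<eta>(1))
      fix u assume u: "r < u \<and> u < r + \<eta> \<and> u \<le> b"
      have r0: "0 \<le> r" using r ab by linarith
      have ru: "r \<le> u" using u by linarith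
      have near: "norm (x s - x r) \<le> \<epsilon>/3" if "s \<in> {r..u}" for s
      proof -
        have "s \<in> {a..b}" "dist s r < \<eta>" using that u r by (auto simp: dist_real_def)
        then show ?thesis using \<eta>(2)[of s] by (simp add: dist_norm)
      qed
      define H where "H = integral {r..u} h"
      define A where "A = integral {r..u} nf"
      have I1: "(f has_integral (x u - x r)) {r..u}" by (rule x_has[OF r0 ru])
      have I2: "((\<lambda>s. f s \<bullet> (x r - z)) has_integral ((x u - x r) \<bullet> (x r - z))) {r..u}"
        using has_integral_linear[OF I1 bounded_linear_inner_left[of "x r - z"]] by (simp add: o_def)
      have I3: "((\<lambda>s. - h s + \<epsilon>/3 * nf s) has_integral (- H + \<epsilon>/3 * A)) {r..u}"
        unfolding H_def A_def
        using h_int[OF r0 ru] nf_int[OF r0 ru]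
        by (intro has_integral_add has_integral_neg has_integral_mult_right) (auto intro: integrable_integral)
      have pw: "f s \<bullet> (x r - z) \<le> - h s + \<epsilon>/3 * nf s" if s: "s \<in> {r..u}" for s
      proof -
        have s0: "s \<ge> 0" using s r0 by auto
        have "f s \<bullet> (x r - z) = f s \<bullet> (x s - z) + f s \<bullet> (x r - x s)"
          by (simp add: inner_diff_right)
        also have "f s \<bullet> (x r - x s) \<le> norm (f s) * norm (x r - x s)"
          by (rule Cauchy_Schwarz_ineq2[THEN order_trans[OF abs_ge_self]])
        also have "norm (f s) * norm (x r - x s) \<le> norm (f s) * (\<epsilon>/3)"
          using near[OF s] by (intro mult_left_mono) (auto simp: norm_minus_commute)
        finally show ?thesis using key[OF s0 z] by (simp add: nf_def mult.commute)
      qed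
      have L1: "(x u - x r) \<bullet> (x r - z) \<le> - H + \<epsilon>/3 * A"
        using has_integral_le[OF I2 I3] pw by blast
      have nA: "norm (x u - x r) \<le> A"
      proof -
        have "norm (integral {r..u} f) \<le> integral {r..u} nf"
          using f_int[OF r0 ru] nf_int[OF r0 ru] by (intro integral_norm_bound_integral) (auto simp: nf_def)
        then show ?thesis using integral_unique[OF I1] by (simp add: A_def)
      qed
      have nE: "norm (x u - x r) \<le> \<epsilon>/3" using near[of u] ru by simp
      have L2: "(norm (x u - x r))\<^sup>2 \<le> \<epsilon>/3 * A"
        using mult_mono[OF nE nA] e by (simp add: power2_eq_square)
      have ident: "(norm (x u - z))\<^sup>2 = (norm (x r - z))\<^sup>2 + 2 * ((x u - x r) \<bullet> (x r - z)) + (norm (x u - x r))\<^sup>2"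
        using norm_add_sq[of "x u - x r" "x r - z"] by simp
      have sp1: "integral {a..u} h = integral {a..r} h + H"
        unfolding H_def by (rule int_split[OF ab(1) r(1) ru h_int])
      have sp2: "integral {a..u} nf = integral {a..r} nf + A"
        unfolding A_def by (rule int_split[OF ab(1) r(1) ru nf_int])
      show "\<Psi> u \<le> \<Psi> r"
        unfolding \<Psi>_def using ident sp1 sp2 L1 L2 by (simp add: algebra_simps)
    qed
  qed
  then show ?thesis by (simp add: \<Psi>_def)
qed

lemma energy:
  assumes z: "z \<in> X" "g z \<le> 0" and ab: "0 \<le> a" "a \<le> b"
  shows "(norm (x b - z))\<^sup>2 + 2 * integral {a..b} h \<le> (norm (x a - z))\<^sup>2"
proof (rule field_le_epsilon)
  fix e :: real assume e: "e > 0"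
  define A where "A = integral {a..b} nf"
  have A0: "A \<ge> 0" unfolding A_def
    using nf_int[OF ab] ab by (intro integral_nonneg) (auto simp: nf_def)
  have "(norm (x b - z))\<^sup>2 + 2 * integral {a..b} h \<le> (norm (x a - z))\<^sup>2 + (e / (A + 1)) * A"
    using energy_eps[OF z ab, of "e / (A+1)"] e A0 by (simp add: A_def)
  also have "(e / (A + 1)) * A \<le> e"
    using e A0 by (simp add: field_simps)
  finally show "(norm (x b - z))\<^sup>2 + 2 * integral {a..b} h \<le> (norm (x a - z))\<^sup>2 + e" by simp
qed

lemma dist_mono:
  assumes z: "z \<in> X" "g z \<le> 0" and ab: "0 \<le> a" "a \<le> b"
  shows "norm (x b - z) \<le> norm (x a - z)"
proof -
  have "integral {a..b} h \<ge> 0"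
    using h_int[OF ab] ab h_nonneg by (intro integral_nonneg) auto
  then have "(norm (x b - z))\<^sup>2 \<le> (norm (x a - z))\<^sup>2" using energy[OF assms] by linarith
  then show ?thesis by (simp add: power_mono_iff)
qed

lemma h_bound:
  assumes z: "z \<in> X" "g z \<le> 0" and ab: "0 \<le> a" "a \<le> b"
  shows "2 * integral {a..b} h \<le> (norm (x a - z))\<^sup>2 - (norm (x b - z))\<^sup>2"
  using energy[OF assms] by linarith

end

lemma clamp_lip:
  fixes p q l u :: real
  shows "min (max p l) u - min (max q l) u \<le> \<bar>p - q\<bar>"
  by (auto simp: min_def max_def abs_if)

context flow
begin

lemma G_bound: "\<exists>L\<ge>0. \<forall>y. norm y \<le> R \<longrightarrow> norm (G y) \<le> L"
proof -
  have "compact (gp ` cball 0 (R + 1))"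
    by (rule compact_continuous_image[OF continuous_on_subset[OF gp_cont]]) auto
  then obtain M where M: "\<And>w. w \<in> cball 0 (R+1) \<Longrightarrow> gp w \<le> M"
    using compact_imp_bounded bounded_real by (metis abs_le_D1 imageI)
  have "norm (G y) \<le> max M 0" if y: "norm y \<le> R" for y
  proof (cases "G y = 0")
    case True then show ?thesis by simp
  next
    case False
    define w where "w = y + (1 / norm (G y)) *\<^sub>R G y"
    have "norm w \<le> norm y + norm ((1 / norm (G y)) *\<^sub>R G y)"
      unfolding w_def by (rule norm_triangle_ineq)
    also have "\<dots> = norm y + 1" using False by simp
    finally have "w \<in> cball 0 (R+1)" using y by simp
    then have "gp w \<le> M" by (rule M)
    moreover have "gp w \<ge> gp y + G y \<bullet> (w - y)"
      using G_subgrad[of y] by (simp add: is_subgradient_def gp_def)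
    moreover have "G y \<bullet> (w - y) = norm (G y)"
      using False by (simp add: w_def power2_norm_eq_inner[symmetric] power2_eq_square)
    ultimately show ?thesis using gp_nonneg[of y] by linarith
  qed
  then show ?thesis by (intro exI[of _ "max M 0"]) auto
qed

lemma traj_bounded:
  assumes z: "z \<in> X" "g z \<le> 0"
  shows "\<exists>L\<ge>0. \<forall>t\<ge>0. norm (G (x t)) \<le> L"
proof -
  obtain L where L: "L \<ge> 0" "\<And>y. norm y \<le> norm z + norm (x 0 - z) \<Longrightarrow> norm (G y) \<le> L"
    using G_bound[of "norm z + norm (x 0 - z)"] by blast
  have "norm (x t) \<le> norm z + norm (x 0 - z)" if "t \<ge> 0" for t
  proof -
    have "norm (x t) \<le> norm z + norm (x t - z)" by (metis norm_triangle_sub add.commute)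
    also have "\<dots> \<le> norm z + norm (x 0 - z)" using dist_mono[OF z, of 0 t] that by simp
    finally show ?thesis .
  qed
  then show ?thesis using L by blast
qed

definition "rho e y = min (max (D y) (e/3)) (2*e/3)"

lemma rho_lemma:
  assumes e: "e > 0" and c: "c > 0" and T: "T \<ge> 0"
    and hyp: "\<And>t. t \<ge> T \<Longrightarrow> D (x t) < e \<Longrightarrow> gp (x t) \<ge> c"
    and L: "L \<ge> 0" "\<And>t. t \<ge> 0 \<Longrightarrow> norm (G (x t)) \<le> L"
    and ab: "T \<le> a" "a \<le> b"
  shows "rho e (x b) - rho e (x a) \<le> (4/e + L/c) * integral {a..b} h"
proof -
  define K where "K = 4/e + L/c"
  have K0: "K \<ge> 0" using e c L by (simp add: K_def)
  have a0: "0 \<le> a" using T ab by linarith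
  have pw: "nf s \<le> K * h s" if s: "s \<ge> T" "e/4 < D (x s)" "D (x s) < 3*e/4" for s
  proof -
    have s0: "s \<ge> 0" using s T by linarith
    define d where "d = D (x s)"
    have gpc: "gp (x s) \<ge> c" using hyp[OF s(1)] s(3) e by simp
    have al: "\<alpha> s \<ge> 0" "\<beta> s \<ge> 0" using \<alpha>_nonneg \<beta>_nonneg s0 by auto
    have d0: "d \<ge> 0" unfolding d_def by (rule D_nonneg)
    have "1 \<le> 4 * d / e" using s(2) e unfolding d_def by (simp add: field_simps)
    then have "d * 1 \<le> d * (4 * d / e)" using d0 by (rule mult_left_mono)
    moreover have "d * (4 * d / e) = 4/e * d\<^sup>2" by (simp add: power2_eq_square mult_ac)
    ultimately have "d \<le> 4/e * d\<^sup>2" by (metis mult.right_neutral)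
    then have "\<alpha> s * d \<le> \<alpha> s * (4/e * d\<^sup>2)" using al(1) by (rule mult_left_mono)
    then have 1: "\<alpha> s * d \<le> 4/e * (\<alpha> s * d\<^sup>2)" by (simp add: mult_ac)
    have Lc: "L/c \<ge> 0" using L c by simp
    have "L/c * c \<le> L/c * gp (x s)" using gpc Lc by (rule mult_left_mono)
    then have "L \<le> L/c * gp (x s)" using c by simp
    then have "norm (G (x s)) \<le> L/c * gp (x s)" using L(2)[OF s0] by linarith
    then have "\<beta> s * norm (G (x s)) \<le> \<beta> s * (L/c * gp (x s))" using al(2) by (rule mult_left_mono)
    then have 2: "\<beta> s * norm (G (x s)) \<le> L/c * (\<beta> s * gp (x s))" by (simp add: mult_ac)
    have e4: "4/e \<ge> 0" using e by simp
    have n1: "4/e * (\<beta> s * gp (x s)) \<ge> 0" using e4 al gp_nonneg[of "x s"] by (intro mult_nonneg_nonneg) auto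
    have n2: "L/c * (\<alpha> s * d\<^sup>2) \<ge> 0" using Lc al by (intro mult_nonneg_nonneg) auto
    have KH: "K * h s = 4/e * (\<alpha> s * d\<^sup>2) + 4/e * (\<beta> s * gp (x s)) + L/c * (\<alpha> s * d\<^sup>2) + L/c * (\<beta> s * gp (x s))"
      unfolding K_def h_def d_def by (simp add: algebra_simps)
    have "nf s \<le> \<alpha> s * d + \<beta> s * norm (G (x s))" unfolding nf_def d_def by (rule norm_f_le[OF s0])
    then show ?thesis using 1 2 n1 n2 KH by linarith
  qed
  define \<Psi> where "\<Psi> t = rho e (x t) - K * integral {a..t} h" for t
  have "\<Psi> b \<le> \<Psi> a"
  proof (rule real_induct_mono[OF ab(2)])
    have c1: "continuous_on {a..b} (\<lambda>t. integral {a..t} h)"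
      by (rule indefinite_integral_continuous_1[OF h_int[OF a0 ab(2)]])
    have c3: "continuous_on {a..b} (\<lambda>t. D (x t))"
      using x_cont[OF a0 ab(2)] by (intro continuous_on_compose2[OF D_cont]) auto
    show "continuous_on {a..b} \<Psi>"
      unfolding \<Psi>_def[abs_def] rho_def using c1 c3 by (intro continuous_intros)
  next
    fix r assume r: "a \<le> r" "r < b"
    have rb: "r \<in> {a..b}" using r by auto
    have c3: "continuous_on {a..b} (\<lambda>t. D (x t))"
      using x_cont[OF a0 ab(2)] by (intro continuous_on_compose2[OF D_cont]) auto
    have e24: "e/24 > 0" using e by simp
    obtain \<eta> where \<eta>: "\<eta> > 0" "\<And>u. u \<in> {a..b} \<Longrightarrow> dist u r < \<eta> \<Longrightarrow> dist (D (x u)) (D (x r)) < e/24"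
      using c3 rb e24 unfolding continuous_on_iff by metis
    show "\<exists>\<eta>>0. \<forall>u. r < u \<and> u < r + \<eta> \<and> u \<le> b \<longrightarrow> \<Psi> u \<le> \<Psi> r"
    proof (intro exI[of _ \<eta>] conjI allI impI)
      show "\<eta> > 0" by (rule \<eta>(1))
      fix u assume u: "r < u \<and> u < r + \<eta> \<and> u \<le> b"
      have r0: "0 \<le> r" using r a0 by linarith
      have ru: "r \<le> u" using u by linarith
      have near: "\<bar>D (x s) - D (x r)\<bar> < e/24" if "s \<in> {r..u}" for s
      proof -
        have "s \<in> {a..b}" "dist s r < \<eta>" using that u r by (auto simp: dist_real_def)
        then show ?thesis using \<eta>(2)[of s] by (simp add: dist_real_def)
      qed
      define H where "H = integral {r..u} h"
      have H0: "H \<ge> 0" unfolding H_def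
        using h_int[OF r0 ru] h_nonneg r0 by (intro integral_nonneg) auto
      have sp1: "integral {a..u} h = integral {a..r} h + H"
        unfolding H_def by (rule int_split[OF a0 r(1) ru h_int])
      have "rho e (x u) - rho e (x r) \<le> K * H"
      proof (cases "rho e (x u) = rho e (x r)")
        case True then show ?thesis using K0 H0 by simp
      next
        case False
        have nu: "\<bar>D (x u) - D (x r)\<bar> < e/24" using near[of u] ru by simp
        have Dr: "e/3 - e/24 < D (x r) \<and> D (x r) < 2*e/3 + e/24"
        proof (rule ccontr)
          assume "\<not> ?thesis"
          then have "D (x r) \<le> e/3 - e/24 \<or> D (x r) \<ge> 2*e/3 + e/24" by linarith
          then have "rho e (x u) = rho e (x r)"
            using nu e unfolding rho_def by (auto simp: min_def max_def abs_if)
          then show False using False by simp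
        qed
        have inM: "e/4 < D (x s) \<and> D (x s) < 3*e/4" if "s \<in> {r..u}" for s
          using near[OF that] Dr unfolding abs_less_iff by linarith
        have "rho e (x u) - rho e (x r) \<le> \<bar>D (x u) - D (x r)\<bar>"
          unfolding rho_def by (rule clamp_lip)
        also have "\<dots> \<le> dist (x u) (x r)"
          using D_lip[of "x u" "x r"] D_lip[of "x r" "x u"] by (simp add: dist_commute abs_le_iff)
        also have "\<dots> \<le> integral {r..u} nf"
        proof -
          have "norm (integral {r..u} f) \<le> integral {r..u} nf"
            using f_int[OF r0 ru] nf_int[OF r0 ru] by (intro integral_norm_bound_integral) (auto simp: nf_def)
          then show ?thesis using integral_unique[OF x_has[OF r0 ru]] by (simp add: dist_norm)
        qed
        also have "\<dots> \<le> integral {r..u} (\<lambda>s. K * h s)"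
        proof (rule integral_le[OF nf_int[OF r0 ru] integrable_on_mult_right[OF h_int[OF r0 ru]]])
          fix s assume "s \<in> {r..u}"
          then show "nf s \<le> K * h s" using pw[of s] inM[of s] r ab by auto
        qed
        also have "\<dots> = K * H" unfolding H_def by simp
        finally show ?thesis .
      qed
      then show "\<Psi> u \<le> \<Psi> r" unfolding \<Psi>_def using sp1 by (simp add: algebra_simps)
    qed
  qed
  then show ?thesis unfolding \<Psi>_def K_def by simp
qed

end

context flow
begin

lemma diverge_bound:
  assumes div: "filterlim (\<lambda>T. integral {0..T} w) at_top at_top"
    and wint: "\<And>a b. 0 \<le> a \<Longrightarrow> a \<le> b \<Longrightarrow> (w::real\<Rightarrow>real) integrable_on {a..b}"
    and T: "T' \<ge> 0"
  shows "\<exists>b\<ge>T'. integral {T'..b} w \<ge> Z"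
proof -
  have "eventually (\<lambda>b. integral {0..b} w \<ge> Z + integral {0..T'} w) at_top"
    using div by (simp add: filterlim_at_top)
  then obtain N where N: "\<And>b. b \<ge> N \<Longrightarrow> integral {0..b} w \<ge> Z + integral {0..T'} w"
    by (auto simp: eventually_at_top_linorder)
  define b where "b = max N T'"
  have "integral {0..b} w = integral {0..T'} w + integral {T'..b} w"
    using int_split[of 0 T' b w, OF _ T _ wint] by (simp add: b_def)
  moreover have "integral {0..b} w \<ge> Z + integral {0..T'} w" using N[of b] by (simp add: b_def)
  ultimately show ?thesis by (intro exI[of _ b]) (auto simp: b_def)
qed

lemma claim:
  assumes c: "c > 0"
  shows "\<exists>t\<ge>T. (D (x t))\<^sup>2 < c \<and> gp (x t) < c"
proof (rule ccontr)
  assume "\<not> ?thesis"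
  then have hyp0: "\<And>t. t \<ge> T \<Longrightarrow> (D (x t))\<^sup>2 \<ge> c \<or> gp (x t) \<ge> c" by (meson not_less)
  define T1 where "T1 = max T 0"
  have T10: "T1 \<ge> 0" "T1 \<ge> T" by (auto simp: T1_def)
  obtain z0 where z0: "z0 \<in> X" "g z0 \<le> 0" using sol_nonempty by auto
  define \<phi> where "\<phi> t = (norm (x t - z0))\<^sup>2" for t
  define P where "P = \<phi> 0"
  have \<phi>0: "\<phi> t \<ge> 0" for t by (simp add: \<phi>_def)
  have \<phi>mono: "\<phi> b \<le> \<phi> a" if "0 \<le> a" "a \<le> b" for a b
    using dist_mono[OF z0 that] unfolding \<phi>_def by (simp add: power_mono)
  have hb0: "2 * integral {a..b} h \<le> \<phi> a - \<phi> b" if "0 \<le> a" "a \<le> b" for a b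
    using h_bound[OF z0 that] unfolding \<phi>_def .
  have hb: "2 * integral {a..b} h \<le> P" if "0 \<le> a" "a \<le> b" for a b
    using hb0[OF that] \<phi>0[of b] \<phi>mono[of 0 a] that unfolding P_def by linarith
  have P0: "P \<ge> 0" by (simp add: P_def \<phi>0)
  define e where "e = sqrt c"
  have e0: "e > 0" and ec: "e\<^sup>2 = c" using c by (auto simp: e_def)
  have hyp: "gp (x t) \<ge> c" if "t \<ge> T1" "D (x t) < e" for t
  proof -
    have "(D (x t))\<^sup>2 < e\<^sup>2" using that D_nonneg[of "x t"] by (intro power_strict_mono) auto
    then show ?thesis using hyp0[of t] that T10 ec by auto
  qed
  consider (A) "\<exists>T'\<ge>T1. \<forall>t\<ge>T'. D (x t) \<ge> e/3"
    | (B) "\<exists>T'\<ge>T1. \<forall>t\<ge>T'. D (x t) \<le> 2*e/3"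
    | (C) "\<forall>T'\<ge>T1. \<exists>t\<ge>T'. D (x t) < e/3" "\<forall>T'\<ge>T1. \<exists>t\<ge>T'. D (x t) > 2*e/3"
    by (meson not_le)
  then show False
  proof cases
    case A
    then obtain T' where T': "T' \<ge> T1" "\<And>t. t \<ge> T' \<Longrightarrow> D (x t) \<ge> e/3" by blast
    have T'0: "T' \<ge> 0" using T' T10 by linarith
    obtain b where b: "b \<ge> T'" "integral {T'..b} \<alpha> \<ge> 9 * (P + 1) / c"
      using diverge_bound[OF \<alpha>_div \<alpha>_int T'0] by blast
    have "integral {T'..b} (\<lambda>s. c/9 * \<alpha> s) \<le> integral {T'..b} h"
    proof (rule integral_le[OF integrable_on_mult_right[OF \<alpha>_int[OF T'0 b(1)]] h_int[OF T'0 b(1)]])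
      fix s assume s: "s \<in> {T'..b}"
      then have s0: "s \<ge> 0" using T'0 by auto
      have "(e/3)\<^sup>2 \<le> (D (x s))\<^sup>2" using T'(2)[of s] s e0 by (intro power_mono) auto
      then have "c/9 \<le> (D (x s))\<^sup>2" using ec by (simp add: power_divide)
      then have "\<alpha> s * (c/9) \<le> \<alpha> s * (D (x s))\<^sup>2" using \<alpha>_nonneg[OF s0] by (rule mult_left_mono)
      moreover have "\<beta> s * gp (x s) \<ge> 0" using \<beta>_nonneg[OF s0] gp_nonneg by simp
      ultimately show "c/9 * \<alpha> s \<le> h s" unfolding h_def by (simp add: mult.commute)
    qed
    moreover have "integral {T'..b} (\<lambda>s. c/9 * \<alpha> s) = c/9 * integral {T'..b} \<alpha>" by simp
    moreover have "c/9 * integral {T'..b} \<alpha> \<ge> c/9 * (9 * (P + 1) / c)"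
      using b(2) c by (intro mult_left_mono) auto
    moreover have "c/9 * (9 * (P + 1) / c) = P + 1" using c by simp
    ultimately have "integral {T'..b} h \<ge> P + 1" by linarith
    then show False using hb[OF T'0 b(1)] P0 by linarith
  next
    case B
    then obtain T' where T': "T' \<ge> T1" "\<And>t. t \<ge> T' \<Longrightarrow> D (x t) \<le> 2*e/3" by blast
    have T'0: "T' \<ge> 0" using T' T10 by linarith
    obtain b where b: "b \<ge> T'" "integral {T'..b} \<beta> \<ge> (P + 1) / c"
      using diverge_bound[OF \<beta>_div \<beta>_int T'0] by blast
    have "integral {T'..b} (\<lambda>s. c * \<beta> s) \<le> integral {T'..b} h"
    proof (rule integral_le[OF integrable_on_mult_right[OF \<beta>_int[OF T'0 b(1)]] h_int[OF T'0 b(1)]])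
      fix s assume s: "s \<in> {T'..b}"
      then have s0: "s \<ge> 0" using T'0 by auto
      have "D (x s) < e" using T'(2)[of s] s e0 by auto
      then have "gp (x s) \<ge> c" using hyp[of s] s T' by auto
      then have "\<beta> s * c \<le> \<beta> s * gp (x s)" using \<beta>_nonneg[OF s0] by (rule mult_left_mono)
      moreover have "\<alpha> s * (D (x s))\<^sup>2 \<ge> 0" using \<alpha>_nonneg[OF s0] by simp
      ultimately show "c * \<beta> s \<le> h s" unfolding h_def by (simp add: mult.commute)
    qed
    moreover have "integral {T'..b} (\<lambda>s. c * \<beta> s) = c * integral {T'..b} \<beta>" by simp
    moreover have "c * integral {T'..b} \<beta> \<ge> c * ((P + 1) / c)"
      using b(2) c by (intro mult_left_mono) auto
    moreover have "c * ((P + 1) / c) = P + 1" using c by simp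
    ultimately have "integral {T'..b} h \<ge> P + 1" by linarith
    then show False using hb[OF T'0 b(1)] P0 by linarith
  next
    case C
    obtain L where L: "L \<ge> 0" "\<And>t. t \<ge> 0 \<Longrightarrow> norm (G (x t)) \<le> L"
      using traj_bounded[OF z0] by blast
    define K where "K = 4/e + L/c"
    have K0: "K > 0" using e0 c L by (simp add: K_def add_pos_nonneg)
    define \<gamma> where "\<gamma> = 2 * (e/3) / K"
    have \<gamma>0: "\<gamma> > 0" using e0 K0 by (simp add: \<gamma>_def)
    have step: "\<phi> a - \<phi> b \<ge> \<gamma>" if ab: "T1 \<le> a" "a \<le> b" "D (x a) < e/3" "D (x b) > 2*e/3" for a b
    proof -
      have a0: "0 \<le> a" using ab T10 by linarith
      have "rho e (x a) = e/3" using ab e0 by (simp add: rho_def)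
      moreover have "rho e (x b) = 2*e/3" using ab e0 by (simp add: rho_def)
      moreover have "rho e (x b) - rho e (x a) \<le> K * integral {a..b} h"
        unfolding K_def by (rule rho_lemma[OF e0 c T10(1) hyp L ab(1,2)])
      ultimately have "e/3 \<le> K * integral {a..b} h" by simp
      also have "\<dots> \<le> K * ((\<phi> a - \<phi> b) / 2)" using hb0[OF a0 ab(2)] K0 by (intro mult_left_mono) auto
      finally have "e/3 \<le> K * ((\<phi> a - \<phi> b) / 2)" .
      then show ?thesis using K0 unfolding \<gamma>_def by (simp add: field_simps)
    qed
    have ind: "\<forall>T'\<ge>T1. \<exists>t\<ge>T'. \<phi> T' - \<phi> t \<ge> real n * \<gamma>" for n
    proof (induction n)
      case 0
      show ?case by auto
    next
      case (Suc n)
      show ?case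
      proof (intro allI impI)
        fix T' assume T': "T' \<ge> T1"
        obtain a where a: "a \<ge> T'" "D (x a) < e/3" using C(1) T' by blast
        obtain b where b: "b \<ge> a" "D (x b) > 2*e/3" using C(2) a T' by (meson order_trans)
        obtain t where t: "t \<ge> b" "\<phi> b - \<phi> t \<ge> real n * \<gamma>" using Suc b a T' by (meson order_trans)
        have "\<phi> a \<le> \<phi> T'" using \<phi>mono[of T' a] a T' T10 by linarith
        moreover have "\<phi> a - \<phi> b \<ge> \<gamma>" using step[of a b] a b T' by linarith
        ultimately have "\<phi> T' - \<phi> t \<ge> real (Suc n) * \<gamma>" using t by (simp add: algebra_simps)
        then show "\<exists>t\<ge>T'. \<phi> T' - \<phi> t \<ge> real (Suc n) * \<gamma>" using t a b by (intro exI[of _ t]) auto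
      qed
    qed
    obtain n :: nat where n: "(P + 1) / \<gamma> \<le> real n" using real_arch_simple by blast
    then have "P + 1 \<le> real n * \<gamma>" using \<gamma>0 by (simp add: field_simps)
    moreover obtain t where "t \<ge> T1" "\<phi> T1 - \<phi> t \<ge> real n * \<gamma>" using ind[of n] by blast
    moreover have "\<phi> T1 \<le> P" using \<phi>mono[of 0 T1] T10 unfolding P_def by simp
    ultimately show False using \<phi>0[of t] by linarith
  qed
qed

lemma conv: "\<exists>xs \<in> {y \<in> X. g y \<le> 0}. (x \<longlongrightarrow> xs) at_top"
proof -
  have "\<forall>n::nat. \<exists>t\<ge>real n. (D (x t))\<^sup>2 < inverse (real (Suc n)) \<and> gp (x t) < inverse (real (Suc n))"
    using claim by simp
  then obtain tt where tt: "\<And>n. tt n \<ge> real n" "\<And>n. (D (x (tt n)))\<^sup>2 < inverse (real (Suc n))"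
      "\<And>n. gp (x (tt n)) < inverse (real (Suc n))"
    by metis
  obtain z0 where z0: "z0 \<in> X" "g z0 \<le> 0" using sol_nonempty by auto
  define B where "B = norm z0 + norm (x 0 - z0)"
  have inB: "x (tt n) \<in> cball 0 B" for n
  proof -
    have t0: "tt n \<ge> 0" using tt(1)[of n] by linarith
    have "norm (x (tt n)) \<le> norm z0 + norm (x (tt n) - z0)" by (metis norm_triangle_sub add.commute)
    also have "\<dots> \<le> B" using dist_mono[OF z0, of 0 "tt n"] t0 by (simp add: B_def)
    finally show ?thesis by simp
  qed
  obtain p r where p: "p \<in> cball 0 B" and r: "strict_mono r" and lim: "((\<lambda>n. x (tt n)) \<circ> r) \<longlonglongrightarrow> p"
    using compact_imp_seq_compact[OF compact_cball[of 0 B]] inB unfolding seq_compact_def by metis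
  have rn: "n \<le> r n" for n using seq_suble[OF r] .
  have invlim: "(\<lambda>n. inverse (real (Suc n))) \<longlonglongrightarrow> 0" by (rule LIMSEQ_inverse_real_of_nat)
  have inv_le: "inverse (real (Suc (r n))) \<le> inverse (real (Suc n))" for n
    using rn[of n] by (simp add: le_imp_inverse_le)
  have isD: "isCont D p" using D_cont by (simp add: continuous_on_eq_continuous_at)
  have isG: "isCont gp p" using gp_cont by (simp add: continuous_on_eq_continuous_at)
  have l1: "(\<lambda>n. (D (x (tt (r n))))\<^sup>2) \<longlonglongrightarrow> (D p)\<^sup>2"
    using isCont_tendsto_compose[OF isD lim] by (intro tendsto_power) (simp add: o_def)
  have "(D p)\<^sup>2 \<le> 0"
    using LIMSEQ_le[OF l1 invlim] tt(2) inv_le by (meson less_imp_le order_trans)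
  then have "D p = 0" by simp
  then have pX: "p \<in> X"
    unfolding D_def using closest_point_in_set[OF X_closed Xne, of p] by simp
  have l2: "(\<lambda>n. gp (x (tt (r n)))) \<longlonglongrightarrow> gp p"
    using isCont_tendsto_compose[OF isG lim] by (simp add: o_def)
  have "gp p \<le> 0"
    using LIMSEQ_le[OF l2 invlim] tt(3) inv_le by (meson less_imp_le order_trans)
  then have gp: "g p \<le> 0" by (simp add: gp_def pos_part_fun_def)
  have "(x \<longlongrightarrow> p) at_top"
  proof (rule tendstoI)
    fix \<epsilon> :: real assume \<epsilon>: "\<epsilon> > 0"
    obtain N where N: "dist (x (tt (r N))) p < \<epsilon>"
      using lim \<epsilon> unfolding o_def by (metis LIMSEQ_iff_nz dist_norm order_refl)
    have t0: "tt (r N) \<ge> 0" using tt(1)[of "r N"] by linarith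
    show "eventually (\<lambda>t. dist (x t) p < \<epsilon>) at_top"
      unfolding eventually_at_top_linorder
    proof (intro exI[of _ "tt (r N)"] allI impI)
      fix t assume "t \<ge> tt (r N)"
      then have "norm (x t - p) \<le> norm (x (tt (r N)) - p)" using dist_mono[OF pX gp t0] by simp
      then show "dist (x t) p < \<epsilon>" using N by (simp add: dist_norm)
    qed
  qed
  then show ?thesis using pX gp by blast
qed

end

theorem theorem1:
  fixes g :: "'a::euclidean_space \<Rightarrow> real"
    and X :: "'a set"
    and \<alpha> \<beta> :: "real \<Rightarrow> real"
    and G :: "'a \<Rightarrow> 'a"
    and x :: "real \<Rightarrow> 'a"
  assumes g_cont: "continuous_on UNIV g"
    and g_convex: "convex_on UNIV g"
    and X_closed: "closed X"
    and X_convex: "convex X"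
    and sol_nonempty: "{y \<in> X. g y \<le> 0} \<noteq> {}"
    and G_subgrad: "\<And>y. is_subgradient (pos_part_fun g) y (G y)"
    and \<alpha>_nonneg: "\<And>t. t \<ge> 0 \<Longrightarrow> \<alpha> t \<ge> 0"
    and \<beta>_nonneg: "\<And>t. t \<ge> 0 \<Longrightarrow> \<beta> t \<ge> 0"
    and \<alpha>_loc_int: "\<And>T. T \<ge> 0 \<Longrightarrow> \<alpha> integrable_on {0..T}"
    and \<beta>_loc_int: "\<And>T. T \<ge> 0 \<Longrightarrow> \<beta> integrable_on {0..T}"
    and \<alpha>_div: "filterlim (\<lambda>T. integral {0..T} \<alpha>) at_top at_top"
    and \<beta>_div: "filterlim (\<lambda>T. integral {0..T} \<beta>) at_top at_top"
    and x_sol: "\<And>t. t \<ge> 0 \<Longrightarrow>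
        (\<lambda>s. - (\<alpha> s *\<^sub>R (x s - closest_point X (x s))) - \<beta> s *\<^sub>R G (x s))
          absolutely_integrable_on {0..t} \<and>
        ((\<lambda>s. - (\<alpha> s *\<^sub>R (x s - closest_point X (x s))) - \<beta> s *\<^sub>R G (x s))
          has_integral (x t - x 0)) {0..t}"
  shows "\<exists>xs \<in> {y \<in> X. g y \<le> 0}. (x \<longlongrightarrow> xs) at_top"
proof -
  have "flow g X \<alpha> \<beta> G x"
    by (rule flow.intro[OF g_cont X_closed X_convex sol_nonempty G_subgrad \<alpha>_nonneg \<beta>_nonneg
          \<alpha>_loc_int \<beta>_loc_int \<alpha>_div \<beta>_div x_sol])
  then show ?thesis by (rule flow.conv)
qed

end
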